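(* Let $\rho$ be a probability distribution on $\mathbb{R}^d\times\mathbb{R}$ with $\mathbb{E}\|a\|^2<\infty$, $\mathbb{E}[b^2]<\infty$, $H=\mathbb{E}[aa^\top]$ invertible, and let $x_*$ minimize $\mathcal{R}(x)=\frac12\mathbb{E}_\rho(\langle x,a\rangle-b)^2$. Assume there are finite constants $R,\sigma,\tilde\kappa$ with $\mathbb{E}[\|a\|^2aa^\top]\preccurlyeq R^2H$, $\mathbb{E}[(b-\langle x_*,a\rangle)^2aa^\top]\preccurlyeq\sigma^2H$ and $\mathbb{E}[\|a\|^2_{H^{-1}}aa^\top]\preccurlyeq\tilde\kappa H$, and let $\alpha,\beta>0$ satisfy $(\alpha+2\beta)R^2\le1$ and $\alpha\le\frac{\beta}{2\tilde\kappa}$. Let $\theta^v_t$ be the variance process defined in the context. Then for every $t\ge0$, $$\mathbb{E}[\theta^v_t\otimes\theta^v_t]\preccurlyeq t^2\sigma^2\begin{bmatrix}2\alpha(\beta H)^{-1}+(2\beta-3\alpha)I & \alpha\beta^{-1}(2\beta-\alpha)I\\ \alpha\beta^{-1}(2\beta-\alpha)I & 2\alpha^2\beta^{-1}I\end{bmatrix}.$$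
   Context: $\preccurlyeq$ is the Loewner order, $\|a\|^2_{H^{-1}}=a^\top H^{-1}a$, $\theta\otimes\theta=\theta\theta^\top$. Let $(a_t,b_t)_{t\ge0}$ be i.i.d. from $\rho$ and define $J_t=\begin{bmatrix} I-\beta a_ta_t^\top & I-\beta a_ta_t^\top\\ -\alpha a_ta_t^\top & I-\alpha a_ta_t^\top\end{bmatrix}$ and $\epsilon_{t+1}=(t+1)(b_t-\langle x_*,a_t\rangle)\begin{bmatrix}\beta a_t\\ \alpha a_t\end{bmatrix}\in\mathbb{R}^{2d}$. The variance process is $\theta^v_0=0\in\mathbb{R}^{2d}$, $\theta^v_{t+1}=J_t\theta^v_t+\epsilon_{t+1}$. *)

theory Defs
  imports "HOL-Probability.Probability"
begin

definition outer :: "real^'n \<Rightarrow> real^'m \<Rightarrow> real^'m^'n" where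
  "outer u v = (\<chi> i j. u $ i * v $ j)"

definition loewner_le :: "real^'n^'n \<Rightarrow> real^'n^'n \<Rightarrow> bool" where
  "loewner_le A B \<longleftrightarrow> (\<forall>x. x \<bullet> (A *v x) \<le> x \<bullet> (B *v x))"

definition stack :: "real^'d \<Rightarrow> real^'d \<Rightarrow> real^('d + 'd)" where
  "stack u v = (\<chi> i. case i of Inl k \<Rightarrow> u $ k | Inr k \<Rightarrow> v $ k)"

definition blockm :: "real^'d^'d \<Rightarrow> real^'d^'d \<Rightarrow> real^'d^'d \<Rightarrow> real^'d^'d
    \<Rightarrow> real^('d + 'd)^('d + 'd)" where
  "blockm A B C D = (\<chi> i j. case i of
      Inl p \<Rightarrow> (case j of Inl q \<Rightarrow> A $ p $ q | Inr q \<Rightarrow> B $ p $ q)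
    | Inr p \<Rightarrow> (case j of Inl q \<Rightarrow> C $ p $ q | Inr q \<Rightarrow> D $ p $ q))"

definition risk :: "((real^'d) \<times> real) measure \<Rightarrow> real^'d \<Rightarrow> real" where
  "risk \<rho> x = (1/2) * integral\<^sup>L \<rho> (\<lambda>(a, b). (x \<bullet> a - b)^2)"

definition Jmat :: "real \<Rightarrow> real \<Rightarrow> real^'d \<Rightarrow> real^('d + 'd)^('d + 'd)" where
  "Jmat \<alpha> \<beta> a = blockm (mat 1 - \<beta> *\<^sub>R outer a a) (mat 1 - \<beta> *\<^sub>R outer a a)
                          (- (\<alpha> *\<^sub>R outer a a)) (mat 1 - \<alpha> *\<^sub>R outer a a)"

definition epsv :: "real \<Rightarrow> real \<Rightarrow> real^'d \<Rightarrow> nat \<Rightarrow> real^'d \<Rightarrow> real \<Rightarrow> real^('d + 'd)" where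
  "epsv \<alpha> \<beta> xs t a b = (real (t + 1) * (b - xs \<bullet> a)) *\<^sub>R stack (\<beta> *\<^sub>R a) (\<alpha> *\<^sub>R a)"

text \<open>Variance process along a sample path z (z t = (a_t, b_t)).\<close>
fun theta_v :: "real \<Rightarrow> real \<Rightarrow> real^'d \<Rightarrow> (nat \<Rightarrow> (real^'d) \<times> real) \<Rightarrow> nat \<Rightarrow> real^('d + 'd)" where
  "theta_v \<alpha> \<beta> xs z 0 = 0"
| "theta_v \<alpha> \<beta> xs z (Suc t) =
     Jmat \<alpha> \<beta> (fst (z t)) *v theta_v \<alpha> \<beta> xs z t + epsv \<alpha> \<beta> xs t (fst (z t)) (snd (z t))"

end

theory Submission
  imports Defs
begin

lemma sum_UNIV_Plus:
  "(\<Sum>i\<in>(UNIV::('a::finite + 'b::finite) set). g i) = (\<Sum>i\<in>UNIV. g (Inl i)) + (\<Sum>i\<in>UNIV. g (Inr i))"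
  by (subst UNIV_Plus_UNIV[symmetric], subst sum.Plus) (auto simp: comp_def)

lemma inner_vec_def': "(x::real^'n) \<bullet> y = (\<Sum>i\<in>UNIV. x $ i * y $ i)"
  by (simp add: inner_vec_def)

lemma outer_qf: "x \<bullet> (outer a b *v y) = (x \<bullet> a) * (b \<bullet> y)"
  by (simp add: outer_def matrix_vector_mult_def inner_vec_def sum_distrib_left sum_distrib_right
      mult_ac) (rule sum.swap)

lemma stack_inner: "stack p q \<bullet> stack p' q' = p \<bullet> p' + q \<bullet> q'"
  by (simp add: stack_def inner_vec_def sum_UNIV_Plus)

lemma stack_split: "u = stack (\<chi> k. u $ Inl k) (\<chi> k. u $ Inr k)"
  by (simp add: stack_def vec_eq_iff split: sum.split)

lemma blockm_qf:
  "stack p q \<bullet> (blockm A B C D *v stack p' q') =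
     p \<bullet> (A *v p') + p \<bullet> (B *v q') + q \<bullet> (C *v p') + q \<bullet> (D *v q')"
  by (simp add: stack_def blockm_def inner_vec_def matrix_vector_mult_def sum_UNIV_Plus
      algebra_simps sum.distrib sum_distrib_left)

lemma stack_vm_blockm:
  "stack x y v* blockm A B C D = stack (x v* A + y v* C) (x v* B + y v* D)"
  by (simp add: vec_eq_iff stack_def blockm_def vector_matrix_mult_def sum_UNIV_Plus
      split: sum.split)

lemma vm_outer: "x v* outer a b = (x \<bullet> a) *\<^sub>R b"
  by (simp add: vec_eq_iff outer_def vector_matrix_mult_def inner_vec_def sum_distrib_left mult_ac)

lemma vm_mat1: "(x::real^'n) v* mat 1 = x"
  by (simp add: vec_eq_iff vector_matrix_mult_def mat_def if_distrib cong: if_cong)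

lemma vm_diff: "(x::real^'n) v* (A - B) = x v* A - x v* B"
  by (simp add: vec_eq_iff vector_matrix_mult_def algebra_simps sum_subtractf)

lemma vm_scale: "(x::real^'n) v* (c *\<^sub>R A) = c *\<^sub>R (x v* A)"
  by (simp add: vec_eq_iff vector_matrix_mult_def sum_distrib_left mult_ac)

lemma vm_uminus: "(x::real^'n) v* (- A) = - (x v* A)"
  by (simp add: vec_eq_iff vector_matrix_mult_def sum_negf)

lemma stack_vmJ:
  "stack x y v* Jmat \<alpha> \<beta> a =
     stack (x - (a \<bullet> (\<beta> *\<^sub>R x + \<alpha> *\<^sub>R y)) *\<^sub>R a) (x + y - (a \<bullet> (\<beta> *\<^sub>R x + \<alpha> *\<^sub>R y)) *\<^sub>R a)"
  unfolding Jmat_def stack_vm_blockm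
  by (simp add: vm_outer vm_mat1 vm_diff vm_scale vm_uminus inner_commute algebra_simps
      inner_add_right scaleR_add_left)

lemmas bI_add = Bochner_Integration.integrable_add
lemmas bI_diff = Bochner_Integration.integrable_diff
lemmas bI_mr = Bochner_Integration.integrable_mult_right
lemmas bI_ml = Bochner_Integration.integrable_mult_left
lemmas bI_sum = Bochner_Integration.integrable_sum
lemmas bL_add = Bochner_Integration.integral_add
lemmas bL_diff = Bochner_Integration.integral_diff
lemmas bL_mr = Bochner_Integration.integral_mult_right
lemmas bL_ml = Bochner_Integration.integral_mult_left
lemmas bL_sum = Bochner_Integration.integral_sum
lemmas bI_bound = Bochner_Integration.integrable_bound

lemma sq_diff_le: "((x::real) - y)^2 \<le> 2 * x^2 + 2 * y^2"
proof -
  have "(x+y)^2 \<ge> 0" by simp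
  moreover have "(x-y)^2 = x^2 - 2*x*y + y^2" "(x+y)^2 = x^2+2*x*y+y^2"
    by (simp_all add: power2_eq_square algebra_simps)
  ultimately show ?thesis by linarith
qed

lemma abs_mult_le_sq: "\<bar>(x::real) * y\<bar> \<le> x^2 + y^2"
proof -
  have "(\<bar>x\<bar> - \<bar>y\<bar>)^2 \<ge> 0" by simp
  moreover have "(\<bar>x\<bar> - \<bar>y\<bar>)^2 = x^2 - 2*\<bar>x\<bar>*\<bar>y\<bar> + y^2"
    by (simp add: power2_eq_square algebra_simps)
  moreover have "\<bar>x * y\<bar> = \<bar>x\<bar>*\<bar>y\<bar>" by (simp add: abs_mult)
  moreover have "\<bar>x\<bar>*\<bar>y\<bar> \<ge> 0" by simp
  ultimately show ?thesis by linarith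
qed

lemma linear_qf: "linear (\<lambda>S::real^'n^'m. x \<bullet> (S *v y))"
  by (rule linearI) (simp_all add: matrix_vector_mult_add_rdistrib inner_add_right
      matrix_vector_mult_def inner_vec_def sum_distrib_left algebra_simps sum.distrib)

lemma bl_qf: "bounded_linear (\<lambda>S::real^'n^'m. x \<bullet> (S *v y))"
  using linear_qf linear_conv_bounded_linear by blast

lemma qf_integrable: fixes F :: "'a \<Rightarrow> real^'n^'m"
  assumes "integrable M F" shows "integrable M (\<lambda>z. x \<bullet> (F z *v y))"
  using integrable_bounded_linear[OF bl_qf assms] .

lemma qf_integral: fixes F :: "'a \<Rightarrow> real^'n^'m"
  assumes "integrable M F" shows "integral\<^sup>L M (\<lambda>z. x \<bullet> (F z *v y)) = x \<bullet> (integral\<^sup>L M F *v y)"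
  using integral_bounded_linear[OF bl_qf assms] .

lemma norm_outer: "norm (outer a b) = norm a * norm b"
proof -
  have "outer a b \<bullet> outer a b = (a \<bullet> a) * (b \<bullet> b)"
    by (simp add: outer_def inner_vec_def sum_distrib_left sum_distrib_right mult_ac)
  then show ?thesis
    by (simp add: norm_eq_sqrt_inner real_sqrt_mult)
qed

lemma cont_outer[continuous_intros]:
  "continuous_on S f \<Longrightarrow> continuous_on S (\<lambda>x. outer (f x) (g x))" if "continuous_on S g"
  unfolding outer_def by (intro continuous_intros that)

lemma scaleR_mv: "(c *\<^sub>R A) *v v = c *\<^sub>R (A *v (v::real^'n))"
  by (simp add: vec_eq_iff matrix_vector_mult_def sum_distrib_left mult_ac)

locale rset =
  fixes \<rho> :: "((real^'d) \<times> real) measure"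
    and H :: "real^'d^'d"
    and xs :: "real^'d"
    and R \<sigma> \<kappa> \<alpha> \<beta> :: real
  assumes rho_prob: "prob_space \<rho>"
    and rho_sets: "sets \<rho> = sets borel"
    and int_a2: "integrable \<rho> (\<lambda>(a, b). (norm a)^2)"
    and int_b2: "integrable \<rho> (\<lambda>(a, b). b^2)"
    and H_def: "H = integral\<^sup>L \<rho> (\<lambda>(a, b). outer a a)"
    and H_inv: "invertible H"
    and xs_min: "\<forall>x. risk \<rho> xs \<le> risk \<rho> x"
    and int_R: "integrable \<rho> (\<lambda>(a, b). (norm a)^2 *\<^sub>R outer a a)"
    and hR: "loewner_le (integral\<^sup>L \<rho> (\<lambda>(a, b). (norm a)^2 *\<^sub>R outer a a)) (R^2 *\<^sub>R H)"
    and int_\<sigma>: "integrable \<rho> (\<lambda>(a, b). (b - xs \<bullet> a)^2 *\<^sub>R outer a a)"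
    and h\<sigma>: "loewner_le (integral\<^sup>L \<rho> (\<lambda>(a, b). (b - xs \<bullet> a)^2 *\<^sub>R outer a a)) (\<sigma>^2 *\<^sub>R H)"
    and int_\<kappa>: "integrable \<rho> (\<lambda>(a, b). (a \<bullet> (matrix_inv H *v a)) *\<^sub>R outer a a)"
    and h\<kappa>: "loewner_le (integral\<^sup>L \<rho> (\<lambda>(a, b). (a \<bullet> (matrix_inv H *v a)) *\<^sub>R outer a a)) (\<kappa> *\<^sub>R H)"
    and \<alpha>_pos: "\<alpha> > 0" and \<beta>_pos: "\<beta> > 0"
    and step1: "(\<alpha> + 2 * \<beta>) * R^2 \<le> 1"
    and step2: "\<alpha> \<le> \<beta> / (2 * \<kappa>)"
begin

interpretation P: prob_space \<rho> by (rule rho_prob)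

lemma meas_cont: "continuous_on UNIV f \<Longrightarrow> f \<in> borel_measurable \<rho>"
  by (simp add: measurable_cong_sets[OF rho_sets refl] borel_measurable_continuous_onI)

lemma I4: "integrable \<rho> (\<lambda>z. norm (fst z) ^ 4)"
  using integrable_norm[OF int_R] by (simp add: split_beta' norm_outer power2_eq_square
     power4_eq_xxxx mult_ac)

lemma Isig: "integrable \<rho> (\<lambda>z. (snd z - xs \<bullet> fst z)^2 * norm (fst z) ^ 2)"
  using integrable_norm[OF int_\<sigma>] by (simp add: split_beta' norm_outer power2_eq_square mult_ac)

lemma I2: "integrable \<rho> (\<lambda>z. norm (fst z) ^ 2)"
  using int_a2 by (simp add: split_beta')

lemma Ib2: "integrable \<rho> (\<lambda>z. (snd z) ^ 2)"
  using int_b2 by (simp add: split_beta')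

lemma Iouter: "integrable \<rho> (\<lambda>z. outer (fst z) (fst z))"
  apply (rule integrable_norm_cancel)
  using I2 apply (simp add: norm_outer power2_eq_square)
  by (intro meas_cont continuous_intros)

lemma KH: "integrable \<rho> (\<lambda>z. (fst z \<bullet> w) * (fst z \<bullet> v))"
   "integral\<^sup>L \<rho> (\<lambda>z. (fst z \<bullet> w) * (fst z \<bullet> v)) = w \<bullet> (H *v v)"
  using qf_integrable[OF Iouter, of w v] qf_integral[OF Iouter, of w v]
  by (simp_all add: outer_qf H_def split_beta' inner_commute)

lemma KR: "integrable \<rho> (\<lambda>z. norm (fst z)^2 * (fst z \<bullet> w)^2)"
   "integral\<^sup>L \<rho> (\<lambda>z. norm (fst z)^2 * (fst z \<bullet> w)^2) \<le> R^2 * (w \<bullet> (H *v w))"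
  using qf_integrable[OF int_R, of w w] qf_integral[OF int_R, of w w] hR[unfolded loewner_le_def, rule_format, of w]
  by (simp_all add: outer_qf split_beta' inner_commute power2_eq_square scaleR_mv mult_ac)

lemma Ks: "integrable \<rho> (\<lambda>z. (snd z - xs \<bullet> fst z)^2 * (fst z \<bullet> w)^2)"
   "integral\<^sup>L \<rho> (\<lambda>z. (snd z - xs \<bullet> fst z)^2 * (fst z \<bullet> w)^2) \<le> \<sigma>^2 * (w \<bullet> (H *v w))"
  using qf_integrable[OF int_\<sigma>, of w w] qf_integral[OF int_\<sigma>, of w w] h\<sigma>[unfolded loewner_le_def, rule_format, of w]
  by (simp_all add: outer_qf split_beta' inner_commute power2_eq_square scaleR_mv mult_ac)

lemma Kk: "integrable \<rho> (\<lambda>z. (fst z \<bullet> (matrix_inv H *v fst z)) * (fst z \<bullet> w)^2)"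
   "integral\<^sup>L \<rho> (\<lambda>z. (fst z \<bullet> (matrix_inv H *v fst z)) * (fst z \<bullet> w)^2) \<le> \<kappa> * (w \<bullet> (H *v w))"
  using qf_integrable[OF int_\<kappa>, of w w] qf_integral[OF int_\<kappa>, of w w] h\<kappa>[unfolded loewner_le_def, rule_format, of w]
  by (simp_all add: outer_qf split_beta' inner_commute power2_eq_square scaleR_mv mult_ac)


abbreviation rr :: "(real^'d) \<times> real \<Rightarrow> real" where "rr z \<equiv> snd z - xs \<bullet> fst z"

lemma Irr: "integrable \<rho> (\<lambda>z. (rr z)^2)"
proof (rule bI_bound[where f="\<lambda>z. 2 * (norm xs)^2 * norm (fst z)^2 + 2 * (snd z)^2"])
  show "integrable \<rho> (\<lambda>z. 2 * (norm xs)^2 * norm (fst z)^2 + 2 * (snd z)^2)"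
    using I2 Ib2 by (intro bI_add bI_mr) auto
  show "(\<lambda>z. (rr z)^2) \<in> borel_measurable \<rho>" by (intro meas_cont continuous_intros)
  show "AE x in \<rho>. norm ((rr x)^2) \<le> norm (2 * (norm xs)^2 * norm (fst x)^2 + 2 * (snd x)^2)"
  proof (intro AE_I2)
    fix z :: "(real^'d) \<times> real"
    have c: "\<bar>xs \<bullet> fst z\<bar> \<le> norm xs * norm (fst z)" by (rule Cauchy_Schwarz_ineq2)
    have "(xs \<bullet> fst z)^2 \<le> (norm xs * norm (fst z))^2"
      using c by (metis abs_ge_zero power2_abs power_mono)
    moreover have "(rr z)^2 \<le> 2 * (xs \<bullet> fst z)^2 + 2 * (snd z)^2"
      using sq_diff_le[of "snd z" "xs \<bullet> fst z"] by simp
    ultimately show "norm ((rr z)^2) \<le> norm (2 * (norm xs)^2 * norm (fst z)^2 + 2 * (snd z)^2)"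
      by (simp add: power_mult_distrib)
  qed
qed

lemma Irw: "integrable \<rho> (\<lambda>z. rr z * (fst z \<bullet> w))"
proof (rule bI_bound[where f="\<lambda>z. (rr z)^2 + (fst z \<bullet> w) * (fst z \<bullet> w)"])
  show "integrable \<rho> (\<lambda>z. (rr z)^2 + (fst z \<bullet> w) * (fst z \<bullet> w))"
    using Irr KH(1)[of w w] by (intro bI_add) auto
  show "(\<lambda>z. rr z * (fst z \<bullet> w)) \<in> borel_measurable \<rho>" by (intro meas_cont continuous_intros)
  show "AE x in \<rho>. norm (rr x * (fst x \<bullet> w)) \<le> norm ((rr x)^2 + (fst x \<bullet> w) * (fst x \<bullet> w))"
  proof (intro AE_I2)
    fix z :: "(real^'d) \<times> real"
    have "\<bar>rr z * (fst z \<bullet> w)\<bar> \<le> (rr z)^2 + (fst z \<bullet> w) * (fst z \<bullet> w)"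
      using abs_mult_le_sq[of "rr z" "fst z \<bullet> w"] by (simp add: power2_eq_square)
    then show "norm (rr z * (fst z \<bullet> w)) \<le> norm ((rr z)^2 + (fst z \<bullet> w) * (fst z \<bullet> w))"
      by simp
  qed
qed

lemma FOC: "integral\<^sup>L \<rho> (\<lambda>z. rr z * (fst z \<bullet> w)) = 0"
proof -
  define g where "g = integral\<^sup>L \<rho> (\<lambda>z. rr z * (fst z \<bullet> w))"
  define h where "h = integral\<^sup>L \<rho> (\<lambda>z. (fst z \<bullet> w) * (fst z \<bullet> w))"
  have h0: "h \<ge> 0" unfolding h_def by (intro integral_nonneg_AE) auto
  have rs: "risk \<rho> (xs + s *\<^sub>R w) = risk \<rho> xs - s * g + s^2 / 2 * h" for s
  proof -
    have e: "((xs + s *\<^sub>R w) \<bullet> fst z - snd z)^2 = (rr z)^2 - 2 * s * (rr z * (fst z \<bullet> w))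
          + s^2 * ((fst z \<bullet> w) * (fst z \<bullet> w))" for z :: "(real^'d) \<times> real"
      by (simp add: inner_add_left inner_commute power2_eq_square algebra_simps)
    have e2: "(xs \<bullet> fst z - snd z)^2 = (rr z)^2" for z :: "(real^'d) \<times> real"
      by (simp add: power2_eq_square algebra_simps)
    have "integral\<^sup>L \<rho> (\<lambda>z. (rr z)^2 - 2 * s * (rr z * (fst z \<bullet> w))
          + s^2 * ((fst z \<bullet> w) * (fst z \<bullet> w))) = integral\<^sup>L \<rho> (\<lambda>z. (rr z)^2) - 2 * s * g + s^2 * h"
      unfolding g_def h_def
      using bL_add[OF bI_diff[OF Irr bI_mr[OF Irw]] bI_mr[OF KH(1)[of w w]]]
        bL_diff[OF Irr bI_mr[OF Irw]]
      by simp
    then show ?thesis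
      unfolding risk_def split_beta' e e2
      by (simp add: algebra_simps)
  qed
  show ?thesis
  proof (rule ccontr)
    assume "integral\<^sup>L \<rho> (\<lambda>z. rr z * (fst z \<bullet> w)) \<noteq> 0"
    then have g0: "g \<noteq> 0" by (simp add: g_def)
    define k where "k = h + 1"
    have k0: "k > 0" using h0 by (simp add: k_def)
    have hk: "h = k - 1" by (simp add: k_def)
    define s where "s = g / k"
    have "risk \<rho> xs \<le> risk \<rho> (xs + s *\<^sub>R w)" using xs_min by blast
    then have "0 \<le> - s * g + s^2 / 2 * h" using rs[of s] by simp
    moreover have "- s * g + s^2 / 2 * h = (g^2/k^2) * ((k - 1)/2 - k)"
      using k0 unfolding s_def hk by (simp add: field_simps power2_eq_square)
    moreover have "(g^2/k^2) * ((k - 1)/2 - k) < 0"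
    proof (rule mult_pos_neg)
      show "g^2 / k^2 > 0" using g0 k0 by simp
      show "(k - 1)/2 - k < 0" using k0 by (simp add: field_simps)
    qed
    ultimately show False by linarith
  qed
qed

end

lemma minv: assumes "invertible (A::real^'n^'n)"
  shows "A ** matrix_inv A = mat 1" "matrix_inv A ** A = mat 1"
  using someI_ex[OF assms[unfolded invertible_def]] unfolding matrix_inv_def by auto

lemma minv_v: assumes "invertible (A::real^'n^'n)"
  shows "A *v (matrix_inv A *v p) = p" "matrix_inv A *v (A *v p) = p"
  by (simp_all add: matrix_vector_mul_assoc minv[OF assms])

lemma minv_scale: assumes "invertible (A::real^'n^'n)" "k \<noteq> 0"
  shows "matrix_inv (k *\<^sub>R A) = (1/k) *\<^sub>R matrix_inv A"
proof -
  have i: "invertible (k *\<^sub>R A)" by (rule scalar_invertible) (use assms in auto)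
  let ?B = "matrix_inv (k *\<^sub>R A)"
  have e: "(k *\<^sub>R A) ** ((1/k) *\<^sub>R matrix_inv A) = mat 1"
    using assms(2) by (simp add: matrix_scalar_ac minv[OF assms(1)] flip: scalar_matrix_assoc)
  have "?B = ?B ** ((k *\<^sub>R A) ** ((1/k) *\<^sub>R matrix_inv A))" by (simp add: e)
  also have "\<dots> = (?B ** (k *\<^sub>R A)) ** ((1/k) *\<^sub>R matrix_inv A)" by (simp add: matrix_mul_assoc)
  also have "\<dots> = (1/k) *\<^sub>R matrix_inv A" using minv(2)[OF i] by simp
  finally show ?thesis .
qed

lemma amgm: assumes "(l::real) > 0" shows "x * y \<le> l / 2 * x^2 + 1 / (2 * l) * y^2"
proof -
  have "l / 2 * x^2 + 1 / (2 * l) * y^2 - x * y = (l * x - y)^2 / (2 * l)"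
    using assms by (simp add: field_simps power2_eq_square)
  moreover have "(l * x - y)^2 / (2 * l) \<ge> 0" using assms by simp
  ultimately show ?thesis by linarith
qed

lemma quad_nonneg: fixes p q :: "real^'n"
  assumes "A > 0" "c^2 \<le> A * b"
  shows "0 \<le> A * (p \<bullet> p) + 2 * c * (p \<bullet> q) + b * (q \<bullet> q)"
proof -
  have "0 \<le> (A *\<^sub>R p + c *\<^sub>R q) \<bullet> (A *\<^sub>R p + c *\<^sub>R q)" by simp
  also have "\<dots> = A * (A * (p \<bullet> p) + 2 * c * (p \<bullet> q) + b * (q \<bullet> q)) - (A * b - c^2) * (q \<bullet> q)"
    by (simp add: inner_add_left inner_add_right inner_commute algebra_simps power2_eq_square)
  finally have "(A * b - c^2) * (q \<bullet> q) \<le> A * (A * (p \<bullet> p) + 2 * c * (p \<bullet> q) + b * (q \<bullet> q))"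
    by simp
  moreover have "0 \<le> (A * b - c^2) * (q \<bullet> q)" using assms by simp
  ultimately have "0 \<le> A * (A * (p \<bullet> p) + 2 * c * (p \<bullet> q) + b * (q \<bullet> q))" by linarith
  then show ?thesis using assms(1) by (simp add: zero_le_mult_iff)
qed

context rset begin

interpretation P: prob_space \<rho> by (rule rho_prob)

abbreviation Hi where "Hi \<equiv> matrix_inv H"

lemma Hsym: "w \<bullet> (H *v v) = v \<bullet> (H *v w)"
  using KH(2)[of w v] KH(2)[of v w] by (simp add: mult.commute)

lemma Hpos: "0 \<le> w \<bullet> (H *v w)"
proof -
  have "0 \<le> integral\<^sup>L \<rho> (\<lambda>z. (fst z \<bullet> w) * (fst z \<bullet> w))" by (rule Bochner_Integration.integral_nonneg) simp
  then show ?thesis using KH(2)[of w w] by simp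
qed

lemma kappa_pos: "\<kappa> > 0"
proof (rule ccontr)
  assume "\<not> \<kappa> > 0"
  then have "\<beta> / (2 * \<kappa>) \<le> 0" using \<beta>_pos by (simp add: divide_nonneg_nonpos)
  then show False using step2 \<alpha>_pos by linarith
qed

lemma ak: "2 * \<alpha> / \<beta> * \<kappa> \<le> 1"
proof -
  have "\<alpha> * (2 * \<kappa>) \<le> \<beta>" using step2 kappa_pos by (simp add: pos_le_divide_eq)
  then have "(2 * \<alpha> * \<kappa>) / \<beta> \<le> 1" using \<beta>_pos by (simp add: pos_divide_le_eq mult_ac)
  then show ?thesis by (simp add: mult_ac)
qed

lemma Hbound: "p \<bullet> (H *v p) \<le> R^2 * (p \<bullet> p)"
proof -
  define h where "h = p \<bullet> (H *v p)"
  have h0: "h \<ge> 0" unfolding h_def by (rule Hpos)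
  show ?thesis
  proof (cases "h = 0")
    case True then show ?thesis by (simp add: h_def)
  next
    case False
    then have hp: "h > 0" using h0 by simp
    have pw: "(fst z \<bullet> p) * (fst z \<bullet> p) \<le> (p \<bullet> p) / (2 * h) * (norm (fst z)^2 * (fst z \<bullet> p)^2) + h / 2"
      for z :: "(real^'d) \<times> real"
    proof -
      define q where "q = (fst z \<bullet> p)^2"
      have qN: "q \<le> norm (fst z)^2 * (p \<bullet> p)"
        unfolding q_def using Cauchy_Schwarz_ineq[of "fst z" p]
        by (simp add: power2_norm_eq_inner inner_commute)
      have q0: "q \<ge> 0" by (simp add: q_def)
      have "q^2 / (2 * h) + h / 2 - q = (q - h)^2 / (2 * h)"
        using hp by (simp add: field_simps power2_eq_square)
      moreover have "(q - h)^2 / (2 * h) \<ge> 0" using hp by simp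
      ultimately have 1: "q \<le> q^2 / (2 * h) + h / 2" by linarith
      have "q^2 \<le> (norm (fst z)^2 * (p \<bullet> p)) * q"
        using mult_right_mono[OF qN q0] by (simp add: power2_eq_square)
      then have "q^2 / (2 * h) \<le> (norm (fst z)^2 * (p \<bullet> p)) * q / (2 * h)"
        using hp by (intro divide_right_mono) auto
      with 1 have "q \<le> (norm (fst z)^2 * (p \<bullet> p)) * q / (2 * h) + h / 2" by linarith
      then show ?thesis by (simp add: q_def power2_eq_square mult_ac)
    qed
    have "h = integral\<^sup>L \<rho> (\<lambda>z. (fst z \<bullet> p) * (fst z \<bullet> p))" using KH(2)[of p p] by (simp add: h_def)
    also have "\<dots> \<le> integral\<^sup>L \<rho> (\<lambda>z. (p \<bullet> p) / (2 * h) * (norm (fst z)^2 * (fst z \<bullet> p)^2) + h / 2)"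
      by (rule Bochner_Integration.integral_mono[OF KH(1)]) (use KR(1)[of p] pw in auto)
    also have "\<dots> = (p \<bullet> p) / (2 * h) * integral\<^sup>L \<rho> (\<lambda>z. norm (fst z)^2 * (fst z \<bullet> p)^2) + h / 2"
      using KR(1)[of p] by (simp add: P.prob_space)
    also have "\<dots> \<le> (p \<bullet> p) / (2 * h) * (R^2 * h) + h / 2"
      using KR(2)[of p] hp by (intro add_right_mono mult_left_mono) (auto simp: h_def)
    finally have "h \<le> (p \<bullet> p) * R^2 / 2 + h / 2" using hp by (simp add: field_simps)
    then show ?thesis by (simp add: h_def mult.commute)
  qed
qed

end

context rset begin

interpretation P: prob_space \<rho> by (rule rho_prob)

abbreviation Bm where "Bm \<equiv> blockm ((2 * \<alpha>) *\<^sub>R matrix_inv (\<beta> *\<^sub>R H) + (2 * \<beta> - 3 * \<alpha>) *\<^sub>R mat 1)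
                  ((\<alpha> / \<beta> * (2 * \<beta> - \<alpha>)) *\<^sub>R mat 1)
                  ((\<alpha> / \<beta> * (2 * \<beta> - \<alpha>)) *\<^sub>R mat 1)
                  ((2 * \<alpha>^2 / \<beta>) *\<^sub>R mat 1)"

abbreviation cc where "cc \<equiv> \<alpha> / \<beta> * (2 * \<beta> - \<alpha>)"
abbreviation bb where "bb \<equiv> 2 * \<alpha>^2 / \<beta>"

lemma Qstack: "stack p q \<bullet> (Bm *v stack p q) =
   2 * \<alpha> / \<beta> * (p \<bullet> (Hi *v p)) + (2 * \<beta> - 3 * \<alpha>) * (p \<bullet> p) + 2 * cc * (p \<bullet> q) + bb * (q \<bullet> q)"
  using \<beta>_pos
  by (simp add: blockm_qf minv_scale[OF H_inv] matrix_vector_mult_add_rdistrib scaleR_mv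
      inner_add_right inner_commute[of q p] algebra_simps)

lemma Hi_lower: "(2 * \<beta> + \<alpha>) * (p \<bullet> p) \<le> p \<bullet> (Hi *v p)"
proof -
  define r where "r = 1 / (2 * \<beta> + \<alpha>)"
  have r0: "r > 0" using \<alpha>_pos \<beta>_pos by (simp add: r_def)
  define z where "z = Hi *v p"
  have Hz: "H *v z = p" by (simp add: z_def minv_v(1)[OF H_inv])
  have "p \<bullet> p = integral\<^sup>L \<rho> (\<lambda>y. (fst y \<bullet> z) * (fst y \<bullet> p))"
    using KH(2)[of z p] Hsym[of z p] by (simp add: Hz)
  also have "\<dots> \<le> integral\<^sup>L \<rho> (\<lambda>y. r / 2 * ((fst y \<bullet> z) * (fst y \<bullet> z)) + 1 / (2 * r) * ((fst y \<bullet> p) * (fst y \<bullet> p)))"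
    by (rule Bochner_Integration.integral_mono[OF KH(1)])
       (use KH(1) amgm[OF r0] in \<open>auto simp: power2_eq_square\<close>)
  also have "\<dots> = r / 2 * (z \<bullet> (H *v z)) + 1 / (2 * r) * (p \<bullet> (H *v p))"
    using KH(1)[of z z] KH(1)[of p p] KH(2)[of z z] KH(2)[of p p] by simp
  also have "\<dots> \<le> r / 2 * (p \<bullet> (Hi *v p)) + 1 / (2 * r) * (R^2 * (p \<bullet> p))"
  proof -
    have zHz: "z \<bullet> (H *v z) = p \<bullet> (Hi *v p)" unfolding Hz by (simp add: z_def inner_commute)
    have "1 / (2 * r) * (p \<bullet> (H *v p)) \<le> 1 / (2 * r) * (R^2 * (p \<bullet> p))"
      using Hbound[of p] r0 by (intro mult_left_mono) auto
    then show ?thesis unfolding zHz by linarith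
  qed
  finally have 1: "p \<bullet> p \<le> r / 2 * (p \<bullet> (Hi *v p)) + 1 / (2 * r) * (R^2 * (p \<bullet> p))" .
  have "1 / (2 * r) * R^2 \<le> 1 / 2"
    using step1 \<alpha>_pos \<beta>_pos by (simp add: r_def field_simps)
  then have "1 / (2 * r) * (R^2 * (p \<bullet> p)) \<le> 1 / 2 * (p \<bullet> p)"
    by (metis mult.assoc mult_right_mono inner_ge_zero)
  with 1 have "p \<bullet> p \<le> r * (p \<bullet> (Hi *v p))" by linarith
  then have "(p \<bullet> p) / r \<le> p \<bullet> (Hi *v p)" using r0 by (simp add: pos_divide_le_eq mult.commute)
  then show ?thesis by (simp add: r_def mult.commute)
qed

lemma Q_nonneg: "0 \<le> u \<bullet> (Bm *v u)"
proof -
  obtain p q where u: "u = stack p q" using stack_split by blast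
  define A where "A = 2 * \<beta> + \<alpha> + 2 * \<alpha>^2 / \<beta>"
  have "2 * \<alpha>^2 / \<beta> \<ge> 0" using \<beta>_pos by simp
  then have A0: "A > 0" using \<alpha>_pos \<beta>_pos unfolding A_def by linarith
  have "A * bb - cc^2 = 6 * \<alpha>^3 / \<beta> + 3 * \<alpha>^4 / \<beta>^2"
    using \<beta>_pos by (simp add: A_def field_simps power2_eq_square power3_eq_cube power4_eq_xxxx)
  moreover have "6 * \<alpha>^3 / \<beta> + 3 * \<alpha>^4 / \<beta>^2 \<ge> 0" using \<alpha>_pos \<beta>_pos by simp
  ultimately have disc: "cc^2 \<le> A * bb" by linarith
  have "2 * \<alpha> / \<beta> * ((2 * \<beta> + \<alpha>) * (p \<bullet> p)) \<le> 2 * \<alpha> / \<beta> * (p \<bullet> (Hi *v p))"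
    using Hi_lower[of p] \<alpha>_pos \<beta>_pos by (intro mult_left_mono) auto
  moreover have "2 * \<alpha> / \<beta> * ((2 * \<beta> + \<alpha>) * (p \<bullet> p)) + (2 * \<beta> - 3 * \<alpha>) * (p \<bullet> p) = A * (p \<bullet> p)"
    using \<beta>_pos by (simp add: A_def field_simps power2_eq_square)
  moreover have "0 \<le> A * (p \<bullet> p) + 2 * cc * (p \<bullet> q) + bb * (q \<bullet> q)"
    by (rule quad_nonneg[OF A0 disc])
  ultimately show ?thesis unfolding u Qstack by linarith
qed

end

lemma expand1: fixes x a :: "real^'n"
  shows "(x - s *\<^sub>R a) \<bullet> (M *v (x - s *\<^sub>R a)) =
    x \<bullet> (M *v x) - s * (a \<bullet> (x v* M)) - s * (a \<bullet> (M *v x)) + s^2 * (a \<bullet> (M *v a))"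
proof -
  have "a \<bullet> (x v* M) = x \<bullet> (M *v a)" by (metis dot_lmul_matrix inner_commute)
  then show ?thesis
    by (simp add: matrix_vector_mult_diff_distrib matrix_vector_mult_scaleR inner_diff_left inner_diff_right
      inner_commute power2_eq_square algebra_simps)
qed

lemma expand2: fixes x y a :: "real^'n"
  shows "(x - s *\<^sub>R a) \<bullet> (y - s *\<^sub>R a) = x \<bullet> y - s * (a \<bullet> (x + y)) + s^2 * (norm a)^2"
proof -
  have "a \<bullet> a = norm a * norm a" by (metis power2_norm_eq_inner power2_eq_square)
  then show ?thesis
    by (simp add: inner_diff_left inner_diff_right inner_add_right inner_commute power2_eq_square
      algebra_simps)
qed

context rset begin

interpretation P: prob_space \<rho> by (rule rho_prob)

lemma Qpoint:
  fixes x y a :: "real^'d"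
  defines "w \<equiv> \<beta> *\<^sub>R x + \<alpha> *\<^sub>R y"
  defines "L \<equiv> (2 * \<alpha> / \<beta>) *\<^sub>R (x v* Hi + Hi *v x) + (2 * (2 * \<beta> - 3 * \<alpha>)) *\<^sub>R x
      + (2 * cc) *\<^sub>R (2 *\<^sub>R x + y) + (2 * bb) *\<^sub>R (x + y)"
  shows "(stack x y v* Jmat \<alpha> \<beta> a) \<bullet> (Bm *v (stack x y v* Jmat \<alpha> \<beta> a)) =
     stack x (x + y) \<bullet> (Bm *v stack x (x + y)) - (a \<bullet> w) * (a \<bullet> L)
     + 2 * \<alpha> / \<beta> * ((a \<bullet> (Hi *v a)) * (a \<bullet> w)^2) + (2 * \<beta> + \<alpha>) * ((norm a)^2 * (a \<bullet> w)^2)"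
proof -
  define s where "s = a \<bullet> w"
  have e: "stack x y v* Jmat \<alpha> \<beta> a = stack (x - s *\<^sub>R a) (x + y - s *\<^sub>R a)"
    by (simp add: stack_vmJ s_def w_def)
  have k2: "(2 * \<beta> - 3 * \<alpha>) + 2 * cc + bb = 2 * \<beta> + \<alpha>"
    using \<beta>_pos by (simp add: field_simps power2_eq_square)
  define ax where "ax = a \<bullet> x"
  define ay where "ay = a \<bullet> y"
  define la where "la = a \<bullet> (x v* Hi)"
  define ma where "ma = a \<bullet> (Hi *v x)"
  define n where "n = (norm a)^2"
  define hh where "hh = a \<bullet> (Hi *v a)"
  have h1: "(x - s *\<^sub>R a) \<bullet> (Hi *v (x - s *\<^sub>R a)) = x \<bullet> (Hi *v x) - s * la - s * ma + s^2 * hh"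
    by (simp add: expand1 la_def ma_def hh_def)
  have h2: "(x - s *\<^sub>R a) \<bullet> (x - s *\<^sub>R a) = x \<bullet> x - s * (2 * ax) + s^2 * n"
    using expand2[of x s a x] unfolding inner_add_right by (simp add: ax_def n_def)
  have h3: "(x - s *\<^sub>R a) \<bullet> (x + y - s *\<^sub>R a) = x \<bullet> (x + y) - s * (2 * ax + ay) + s^2 * n"
    using expand2[of x s a "x + y"] unfolding inner_add_right by (simp add: ax_def ay_def n_def)
  have h4: "(x + y - s *\<^sub>R a) \<bullet> (x + y - s *\<^sub>R a) = (x + y) \<bullet> (x + y) - s * (2 * ax + 2 * ay) + s^2 * n"
    using expand2[of "x + y" s a "x + y"] unfolding inner_add_right by (simp add: ax_def ay_def n_def)
  have h5: "a \<bullet> L = (2 * \<alpha> / \<beta>) * (la + ma) + 2 * (2 * \<beta> - 3 * \<alpha>) * ax + 2 * cc * (2 * ax + ay)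
      + 2 * bb * (ax + ay)"
    unfolding L_def inner_add_right inner_scaleR_right by (simp add: ax_def ay_def la_def ma_def)
  have alg: "c1 * (P0 - s * la - s * ma + s^2 * hh) + c2 * (X0 - s * (2 * ax) + s^2 * n)
      + 2 * c3 * (X1 - s * (2 * ax + ay) + s^2 * n) + c4 * (Y1 - s * (2 * ax + 2 * ay) + s^2 * n)
      = (c1 * P0 + c2 * X0 + 2 * c3 * X1 + c4 * Y1)
        - s * (c1 * (la + ma) + 2 * c2 * ax + 2 * c3 * (2 * ax + ay) + 2 * c4 * (ax + ay))
        + c1 * (hh * s^2) + (c2 + 2 * c3 + c4) * (n * s^2)" for c1 c2 c3 c4 P0 X0 X1 Y1 :: real
    by (simp add: algebra_simps power2_eq_square)
  have "(stack x y v* Jmat \<alpha> \<beta> a) \<bullet> (Bm *v (stack x y v* Jmat \<alpha> \<beta> a)) =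
     2 * \<alpha> / \<beta> * (x \<bullet> (Hi *v x) - s * la - s * ma + s^2 * hh) + (2 * \<beta> - 3 * \<alpha>) * (x \<bullet> x - s * (2 * ax) + s^2 * n)
      + 2 * cc * (x \<bullet> (x + y) - s * (2 * ax + ay) + s^2 * n) + bb * ((x + y) \<bullet> (x + y) - s * (2 * ax + 2 * ay) + s^2 * n)"
    unfolding e Qstack h1 h2 h3 h4 ..
  also have "\<dots> = (2 * \<alpha> / \<beta> * (x \<bullet> (Hi *v x)) + (2 * \<beta> - 3 * \<alpha>) * (x \<bullet> x) + 2 * cc * (x \<bullet> (x + y)) + bb * ((x + y) \<bullet> (x + y)))
        - s * (a \<bullet> L) + 2 * \<alpha> / \<beta> * (hh * s^2) + (2 * \<beta> + \<alpha>) * (n * s^2)"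
    unfolding alg h5 k2 ..
  finally show ?thesis
    unfolding Qstack by (simp add: s_def hh_def n_def)
qed

end

lemma arith_id:
  fixes \<alpha> \<beta> P0 xx xy yy X1 Y1 :: real
  assumes "\<beta> > 0"
  defines "cc \<equiv> \<alpha> / \<beta> * (2 * \<beta> - \<alpha>)" and "bb \<equiv> 2 * \<alpha>^2 / \<beta>"
  shows "(2*\<alpha>/\<beta>*P0 + (2*\<beta>-3*\<alpha>)*xx + 2*cc*(xx+xy) + bb*(xx + 2*xy + yy))
     - ((2*\<alpha>/\<beta>)*((\<beta>*xx + \<alpha>*xy) + (\<beta>*xx + \<alpha>*xy)) + 2*(2*\<beta>-3*\<alpha>)*X1 + 2*cc*(2*X1+Y1) + 2*bb*(X1+Y1))
     + 3 * (\<beta>*X1 + \<alpha>*Y1)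
     - (2*\<alpha>/\<beta>*P0 + (2*\<beta>-3*\<alpha>)*xx + 2*cc*xy + bb*yy) = -(1 + 2*\<alpha>/\<beta>) * (\<beta>*X1 + \<alpha>*Y1)"
  using assms(1) unfolding cc_def bb_def by (simp add: field_simps power2_eq_square)

context rset begin

interpretation P: prob_space \<rho> by (rule rho_prob)

lemma Kmain:
  fixes x y :: "real^'d"
  defines "w \<equiv> \<beta> *\<^sub>R x + \<alpha> *\<^sub>R y"
  shows "integrable \<rho> (\<lambda>z. (stack x y v* Jmat \<alpha> \<beta> (fst z)) \<bullet> (Bm *v (stack x y v* Jmat \<alpha> \<beta> (fst z))))"
    and "integral\<^sup>L \<rho> (\<lambda>z. (stack x y v* Jmat \<alpha> \<beta> (fst z)) \<bullet> (Bm *v (stack x y v* Jmat \<alpha> \<beta> (fst z))))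
          + w \<bullet> (H *v w) \<le> stack x y \<bullet> (Bm *v stack x y)"
proof -
  define L where "L \<equiv> (2 * \<alpha> / \<beta>) *\<^sub>R (x v* Hi + Hi *v x) + (2 * (2 * \<beta> - 3 * \<alpha>)) *\<^sub>R x
      + (2 * cc) *\<^sub>R (2 *\<^sub>R x + y) + (2 * bb) *\<^sub>R (x + y)"
  define C0 where "C0 = stack x (x + y) \<bullet> (Bm *v stack x (x + y))"
  define c1 where "c1 = 2 * \<alpha> / \<beta>"
  define k2 where "k2 = 2 * \<beta> + \<alpha>"
  have eq: "(\<lambda>z. (stack x y v* Jmat \<alpha> \<beta> (fst z)) \<bullet> (Bm *v (stack x y v* Jmat \<alpha> \<beta> (fst z))))
     = (\<lambda>z. C0 - (fst z \<bullet> w) * (fst z \<bullet> L) + c1 * ((fst z \<bullet> (Hi *v fst z)) * (fst z \<bullet> w)^2)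
           + k2 * (norm (fst z)^2 * (fst z \<bullet> w)^2))"
    by (rule ext) (simp only: Qpoint w_def L_def C0_def c1_def k2_def)
  have i1: "integrable \<rho> (\<lambda>z. (fst z \<bullet> w) * (fst z \<bullet> L))" by (rule KH(1))
  have i2: "integrable \<rho> (\<lambda>z. c1 * ((fst z \<bullet> (Hi *v fst z)) * (fst z \<bullet> w)^2))" by (rule bI_mr[OF Kk(1)])
  have i3: "integrable \<rho> (\<lambda>z. k2 * (norm (fst z)^2 * (fst z \<bullet> w)^2))" by (rule bI_mr[OF KR(1)])
  have i0: "integrable \<rho> (\<lambda>z. C0)" by simp
  show "integrable \<rho> (\<lambda>z. (stack x y v* Jmat \<alpha> \<beta> (fst z)) \<bullet> (Bm *v (stack x y v* Jmat \<alpha> \<beta> (fst z))))"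
    unfolding eq by (intro bI_add bI_diff i0 i1 i2 i3)
  have "integral\<^sup>L \<rho> (\<lambda>z. (stack x y v* Jmat \<alpha> \<beta> (fst z)) \<bullet> (Bm *v (stack x y v* Jmat \<alpha> \<beta> (fst z))))
     = C0 - integral\<^sup>L \<rho> (\<lambda>z. (fst z \<bullet> w) * (fst z \<bullet> L))
       + c1 * integral\<^sup>L \<rho> (\<lambda>z. (fst z \<bullet> (Hi *v fst z)) * (fst z \<bullet> w)^2)
       + k2 * integral\<^sup>L \<rho> (\<lambda>z. norm (fst z)^2 * (fst z \<bullet> w)^2)"
    unfolding eq
    using i0 i1 i2 i3 Kk(1)[of w] KR(1)[of w]
    by (simp add: bL_add bL_diff bI_add bI_diff P.prob_space)
  also have "\<dots> \<le> C0 - w \<bullet> (H *v L) + w \<bullet> (H *v w) + w \<bullet> (H *v w)"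
  proof -
    have "c1 * integral\<^sup>L \<rho> (\<lambda>z. (fst z \<bullet> (Hi *v fst z)) * (fst z \<bullet> w)^2) \<le> c1 * (\<kappa> * (w \<bullet> (H *v w)))"
      using Kk(2)[of w] \<alpha>_pos \<beta>_pos by (intro mult_left_mono) (auto simp: c1_def)
    also have "\<dots> \<le> w \<bullet> (H *v w)"
      using ak Hpos[of w] mult_right_mono[OF ak Hpos[of w]] by (simp add: c1_def mult.assoc)
    finally have 1: "c1 * integral\<^sup>L \<rho> (\<lambda>z. (fst z \<bullet> (Hi *v fst z)) * (fst z \<bullet> w)^2) \<le> w \<bullet> (H *v w)" .
    have "k2 * integral\<^sup>L \<rho> (\<lambda>z. norm (fst z)^2 * (fst z \<bullet> w)^2) \<le> k2 * (R^2 * (w \<bullet> (H *v w)))"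
      using KR(2)[of w] \<alpha>_pos \<beta>_pos by (intro mult_left_mono) (auto simp: k2_def)
    also have "\<dots> \<le> w \<bullet> (H *v w)"
    proof -
      have "k2 * R^2 \<le> 1" using step1 by (simp add: k2_def algebra_simps)
      from mult_right_mono[OF this Hpos[of w]] show ?thesis by (simp add: mult.assoc)
    qed
    finally have 2: "k2 * integral\<^sup>L \<rho> (\<lambda>z. norm (fst z)^2 * (fst z \<bullet> w)^2) \<le> w \<bullet> (H *v w)" .
    show ?thesis using 1 2 KH(2)[of w L] by linarith
  qed
  also have "\<dots> \<le> stack x y \<bullet> (Bm *v stack x y) - w \<bullet> (H *v w)"
  proof -
    define X1 where "X1 = x \<bullet> (H *v w)"
    define Y1 where "Y1 = y \<bullet> (H *v w)"
    have W: "w \<bullet> (H *v w) = \<beta> * X1 + \<alpha> * Y1"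
      by (simp add: w_def X1_def Y1_def inner_add_left)
    have xw: "x \<bullet> w = \<beta> * (x \<bullet> x) + \<alpha> * (x \<bullet> y)"
      by (simp add: w_def inner_add_right)
    have l1: "(x v* Hi) \<bullet> (H *v w) = x \<bullet> w"
      by (simp add: dot_lmul_matrix minv_v(2)[OF H_inv])
    have l2: "(Hi *v x) \<bullet> (H *v w) = x \<bullet> w"
      using Hsym[of w "Hi *v x"] by (simp add: minv_v(1)[OF H_inv] inner_commute)
    have wHL: "w \<bullet> (H *v L) = (2*\<alpha>/\<beta>)*((\<beta>*(x \<bullet> x) + \<alpha>*(x \<bullet> y)) + (\<beta>*(x \<bullet> x) + \<alpha>*(x \<bullet> y)))
        + 2*(2*\<beta>-3*\<alpha>)*X1 + 2*cc*(2*X1+Y1) + 2*bb*(X1+Y1)"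
      unfolding Hsym[of w L] unfolding L_def inner_add_left inner_scaleR_left l1 l2 xw
      by (simp add: X1_def Y1_def)
    have C0e: "C0 = 2*\<alpha>/\<beta>*(x \<bullet> (Hi *v x)) + (2*\<beta>-3*\<alpha>)*(x \<bullet> x) + 2*cc*((x \<bullet> x)+(x \<bullet> y))
        + bb*((x \<bullet> x) + 2*(x \<bullet> y) + (y \<bullet> y))"
      unfolding C0_def Qstack by (simp add: inner_add_left inner_add_right inner_commute[of y x])
    have Qe: "stack x y \<bullet> (Bm *v stack x y) = 2*\<alpha>/\<beta>*(x \<bullet> (Hi *v x)) + (2*\<beta>-3*\<alpha>)*(x \<bullet> x) + 2*cc*(x \<bullet> y) + bb*(y \<bullet> y)"
      by (rule Qstack)
    have "C0 - w \<bullet> (H *v L) + 3 * (w \<bullet> (H *v w)) - stack x y \<bullet> (Bm *v stack x y) = -(1 + 2*\<alpha>/\<beta>) * (w \<bullet> (H *v w))"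
      unfolding C0e wHL Qe W by (rule arith_id[OF \<beta>_pos])
    moreover have "(1 + 2*\<alpha>/\<beta>) * (w \<bullet> (H *v w)) \<ge> 0"
      using \<alpha>_pos \<beta>_pos Hpos[of w] by simp
    ultimately show ?thesis by linarith
  qed
  finally show "integral\<^sup>L \<rho> (\<lambda>z. (stack x y v* Jmat \<alpha> \<beta> (fst z)) \<bullet> (Bm *v (stack x y v* Jmat \<alpha> \<beta> (fst z))))
          + w \<bullet> (H *v w) \<le> stack x y \<bullet> (Bm *v stack x y)" by linarith
qed

end

lemma cont_stack[continuous_intros]:
  "continuous_on S f \<Longrightarrow> continuous_on S g \<Longrightarrow> continuous_on S (\<lambda>x. stack (f x) (g x))"
  unfolding stack_def
  apply (intro continuous_on_vec_lambda)
  subgoal for i by (cases i) (auto intro!: continuous_intros)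
  done

lemma cont_Jentry[continuous_intros]:
  "continuous_on S f \<Longrightarrow> continuous_on S (\<lambda>x. Jmat \<alpha> \<beta> (f x) $ i $ j)"
  by (cases i; cases j) (auto simp: Jmat_def blockm_def outer_def mat_def intro!: continuous_intros)

lemma cont_Jmv[continuous_intros]:
  "continuous_on S f \<Longrightarrow> continuous_on S g \<Longrightarrow> continuous_on S (\<lambda>x. Jmat \<alpha> \<beta> (f x) *v g x)"
  unfolding matrix_vector_mult_def by (intro continuous_intros)

lemma cont_epsv[continuous_intros]:
  "continuous_on S f \<Longrightarrow> continuous_on S g \<Longrightarrow> continuous_on S (\<lambda>x. epsv \<alpha> \<beta> xs t (f x) (g x))"
  unfolding epsv_def by (intro continuous_intros)

lemma theta_local: "(\<And>s. s < t \<Longrightarrow> z s = z' s) \<Longrightarrow> theta_v \<alpha> \<beta> xs z t = theta_v \<alpha> \<beta> xs z' t"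
  by (induction t) auto

context rset begin

interpretation P: prob_space \<rho> by (rule rho_prob)

lemma theta_meas: "t \<le> n \<Longrightarrow> (\<lambda>h. theta_v \<alpha> \<beta> xs h t) \<in> borel_measurable (PiM {..<n} (\<lambda>_. \<rho>))"
proof (induction t)
  case 0 then show ?case by simp
next
  case (Suc t)
  then have tn: "t \<in> {..<n}" by simp
  have c: "(\<lambda>h. h t) \<in> measurable (PiM {..<n} (\<lambda>_. \<rho>)) \<rho>"
    using measurable_component_singleton[OF tn, of "\<lambda>_. \<rho>"] by simp
  have IH: "(\<lambda>h. theta_v \<alpha> \<beta> xs h t) \<in> borel_measurable (PiM {..<n} (\<lambda>_. \<rho>))"
    using Suc by simp
  have pr: "(\<lambda>h. (h t, theta_v \<alpha> \<beta> xs h t)) \<in> measurable (PiM {..<n} (\<lambda>_. \<rho>)) (\<rho> \<Otimes>\<^sub>M borel)"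
    by (rule measurable_Pair[OF c IH])
  have ss0: "sets (\<rho> \<Otimes>\<^sub>M (borel :: (real^('d+'d)) measure)) = sets ((borel :: ((real^'d) \<times> real) measure) \<Otimes>\<^sub>M (borel :: (real^('d+'d)) measure))"
    by (rule sets_pair_measure_cong[OF rho_sets refl])
  have bp: "((borel :: ((real^'d) \<times> real) measure) \<Otimes>\<^sub>M (borel :: (real^('d+'d)) measure)) = borel"
    by (rule borel_prod)
  have ss: "sets (\<rho> \<Otimes>\<^sub>M (borel :: (real^('d+'d)) measure)) = sets (borel :: (((real^'d) \<times> real) \<times> (real^('d+'d))) measure)"
    using ss0 unfolding bp .
  have phi: "(\<lambda>p. Jmat \<alpha> \<beta> (fst (fst p)) *v snd p + epsv \<alpha> \<beta> xs t (fst (fst p)) (snd (fst p)))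
      \<in> borel_measurable (\<rho> \<Otimes>\<^sub>M (borel :: (real^('d+'d)) measure))"
    unfolding measurable_cong_sets[OF ss refl]
    by (intro borel_measurable_continuous_onI continuous_intros)
  show ?case
    using measurable_comp[OF pr phi] by (simp add: comp_def)
qed

end

locale rset2 = rset \<rho> H xs R \<sigma> \<kappa> \<alpha> \<beta>
  for \<rho> :: "((real^'d) \<times> real) measure" and H xs R \<sigma> \<kappa> \<alpha> \<beta> +
  fixes M :: "'w measure" and X :: "nat \<Rightarrow> 'w \<Rightarrow> (real^'d) \<times> real"
  assumes M_prob: "prob_space M"
    and X_indep: "prob_space.indep_vars M (\<lambda>_. \<rho>) X UNIV"
    and X_distr: "\<And>s. distr M \<rho> (X s) = \<rho>"
begin

interpretation P: prob_space \<rho> by (rule rho_prob)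
interpretation Q: prob_space M by (rule M_prob)

abbreviation th where "th t \<omega> \<equiv> theta_v \<alpha> \<beta> xs (\<lambda>s. X s \<omega>) t"

lemma Xmeas: "X s \<in> measurable M \<rho>"
  using X_indep unfolding Q.indep_vars_def by auto

lemma th_restrict: "th t \<omega> = theta_v \<alpha> \<beta> xs (restrict (\<lambda>i. X i \<omega>) {..<t}) t"
  by (rule theta_local) auto

lemma th_meas: "(\<lambda>\<omega>. th t \<omega>) \<in> borel_measurable M"
proof -
  have r: "(\<lambda>\<omega>. restrict (\<lambda>i. X i \<omega>) {..<t}) \<in> measurable M (PiM {..<t} (\<lambda>_. \<rho>))"
    by (rule measurable_restrict) (rule Xmeas)
  show ?thesis
    unfolding th_restrict using measurable_comp[OF r theta_meas[of t t]] by (simp add: comp_def)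
qed

lemma indep_fg:
  assumes f: "f \<in> borel_measurable \<rho>" and g: "(g :: real^('d+'d) \<Rightarrow> real) \<in> borel_measurable borel"
  shows "Q.indep_var borel (\<lambda>\<omega>. f (X t \<omega>)) borel (\<lambda>\<omega>. g (th t \<omega>))"
proof -
  have "Q.indep_var (PiM {t} (\<lambda>_. \<rho>)) (\<lambda>\<omega>. restrict (\<lambda>i. X i \<omega>) {t})
                   (PiM {..<t} (\<lambda>_. \<rho>)) (\<lambda>\<omega>. restrict (\<lambda>i. X i \<omega>) {..<t})"
    by (rule Q.indep_var_restrict[OF X_indep]) auto
  moreover have "(\<lambda>h. f (h t)) \<in> borel_measurable (PiM {t} (\<lambda>_. \<rho>))"
    using measurable_comp[OF measurable_component_singleton[of t "{t}" "\<lambda>_. \<rho>"] f] by (simp add: comp_def)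
  moreover have "(\<lambda>h. g (theta_v \<alpha> \<beta> xs h t)) \<in> borel_measurable (PiM {..<t} (\<lambda>_. \<rho>))"
    using measurable_comp[OF theta_meas[of t t] g] by (simp add: comp_def)
  ultimately have "Q.indep_var borel ((\<lambda>h. f (h t)) \<circ> (\<lambda>\<omega>. restrict (\<lambda>i. X i \<omega>) {t}))
       borel ((\<lambda>h. g (theta_v \<alpha> \<beta> xs h t)) \<circ> (\<lambda>\<omega>. restrict (\<lambda>i. X i \<omega>) {..<t}))"
    by (rule Q.indep_var_compose)
  then show ?thesis by (simp add: comp_def th_restrict[symmetric])
qed

lemma EX:
  assumes f: "f \<in> borel_measurable \<rho>" and fi: "integrable \<rho> (f :: _ \<Rightarrow> real)"
  shows "integrable M (\<lambda>\<omega>. f (X t \<omega>))" "integral\<^sup>L M (\<lambda>\<omega>. f (X t \<omega>)) = integral\<^sup>L \<rho> f"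
proof -
  show "integrable M (\<lambda>\<omega>. f (X t \<omega>))"
    using integrable_distr_eq[OF Xmeas f] fi X_distr by simp
  show "integral\<^sup>L M (\<lambda>\<omega>. f (X t \<omega>)) = integral\<^sup>L \<rho> f"
    using integral_distr[OF Xmeas f] X_distr by simp
qed

lemma Eprod:
  assumes f: "f \<in> borel_measurable \<rho>" and fi: "integrable \<rho> (f :: _ \<Rightarrow> real)"
    and g: "(g :: real^('d+'d) \<Rightarrow> real) \<in> borel_measurable borel"
    and gi: "integrable M (\<lambda>\<omega>. g (th t \<omega>))"
  shows "integrable M (\<lambda>\<omega>. f (X t \<omega>) * g (th t \<omega>))"
    "integral\<^sup>L M (\<lambda>\<omega>. f (X t \<omega>) * g (th t \<omega>)) = integral\<^sup>L \<rho> f * integral\<^sup>L M (\<lambda>\<omega>. g (th t \<omega>))"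
  using Q.indep_var_integrable[OF indep_fg[OF f g] EX(1)[OF f fi] gi]
    Q.indep_var_lebesgue_integral[OF indep_fg[OF f g] EX(1)[OF f fi] gi] EX(2)[OF f fi]
  by auto

end

lemma norm_diff_sq: "norm ((p::'a::real_normed_vector) - q)^2 \<le> 2 * norm p^2 + 2 * norm q^2"
proof -
  have "norm (p - q) \<le> norm p + norm q" by (rule norm_triangle_ineq4)
  then have "norm (p - q)^2 \<le> (norm p + norm q)^2" by (simp add: power_mono)
  also have "\<dots> \<le> 2 * norm p^2 + 2 * norm q^2" using sq_diff_le[of "norm p" "- norm q"] by simp
  finally show ?thesis .
qed

lemma abs_le_1_sq: "\<bar>v::real\<bar> \<le> 1 + v^2"
  using abs_mult_le_sq[of 1 v] by simp

lemma ef_eq: "stack x y \<bullet> epsv \<alpha> \<beta> xs t a b = real (t+1) * ((b - xs \<bullet> a) * (a \<bullet> (\<beta> *\<^sub>R x + \<alpha> *\<^sub>R y)))"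
  unfolding epsv_def inner_scaleR_right stack_inner inner_add_right
  by (simp add: inner_commute algebra_simps)

context rset begin

interpretation P: prob_space \<rho> by (rule rho_prob)

lemma normV: fixes x y a :: "real^'d"
  shows "norm (stack x y v* Jmat \<alpha> \<beta> a)^2 \<le>
    2 * norm x^2 + 2 * norm (x + y)^2 + 4 * norm (\<beta> *\<^sub>R x + \<alpha> *\<^sub>R y)^2 * norm a ^ 4"
proof -
  define w where "w = \<beta> *\<^sub>R x + \<alpha> *\<^sub>R y"
  define s where "s = a \<bullet> w"
  have s2: "norm (s *\<^sub>R a)^2 \<le> norm w^2 * norm a^4"
  proof -
    have "\<bar>s\<bar> \<le> norm a * norm w" unfolding s_def by (rule Cauchy_Schwarz_ineq2)
    then have "s^2 \<le> (norm a * norm w)^2" by (metis abs_ge_zero power2_abs power_mono)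
    then have "s^2 * norm a^2 \<le> (norm a * norm w)^2 * norm a^2" by (simp add: mult_right_mono)
    then show ?thesis by (simp add: power_mult_distrib power2_eq_square power4_eq_xxxx mult_ac)
  qed
  have "norm (stack x y v* Jmat \<alpha> \<beta> a)^2 = norm (x - s *\<^sub>R a)^2 + norm (x + y - s *\<^sub>R a)^2"
    by (simp add: stack_vmJ s_def w_def power2_norm_eq_inner stack_inner)
  also have "\<dots> \<le> (2 * norm x^2 + 2 * norm (s *\<^sub>R a)^2) + (2 * norm (x + y)^2 + 2 * norm (s *\<^sub>R a)^2)"
    by (intro add_mono norm_diff_sq)
  also have "\<dots> \<le> 2 * norm x^2 + 2 * norm (x + y)^2 + 4 * norm w^2 * norm a ^ 4"
    using s2 by linarith
  finally show ?thesis by (simp add: w_def)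
qed

lemma cont_V[continuous_intros]: "continuous_on S f \<Longrightarrow> continuous_on S (\<lambda>z. stack x y v* Jmat \<alpha> \<beta> (f z))"
  unfolding stack_vmJ by (intro continuous_intros)

definition Dom :: "real^'d \<Rightarrow> real^'d \<Rightarrow> nat \<Rightarrow> (real^'d) \<times> real \<Rightarrow> real" where
  "Dom x y t z = 1 + (2 * norm x^2 + 2 * norm (x + y)^2 + 4 * norm (\<beta> *\<^sub>R x + \<alpha> *\<^sub>R y)^2 * norm (fst z) ^ 4)
      + (real (t+1))^2 * ((snd z - xs \<bullet> fst z)^2 * (fst z \<bullet> (\<beta> *\<^sub>R x + \<alpha> *\<^sub>R y))^2)"

lemma Dom_int: "integrable \<rho> (Dom x y t)"
  unfolding Dom_def using I4 Ks(1) by (intro bI_add bI_mr) auto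

lemma ef_sq: "(stack x y \<bullet> epsv \<alpha> \<beta> xs t (fst z) (snd z))^2 =
   (real (t+1))^2 * ((snd z - xs \<bullet> fst z)^2 * (fst z \<bullet> (\<beta> *\<^sub>R x + \<alpha> *\<^sub>R y))^2)"
  by (simp add: ef_eq power_mult_distrib)

lemma V_le_Dom: "((stack x y v* Jmat \<alpha> \<beta> (fst z)) $ i)^2 \<le> Dom x y t z"
proof -
  have "((stack x y v* Jmat \<alpha> \<beta> (fst z)) $ i)^2 \<le> norm (stack x y v* Jmat \<alpha> \<beta> (fst z))^2"
    using component_le_norm_cart by (metis abs_ge_zero power2_abs power_mono)
  also note normV
  finally have 1: "((stack x y v* Jmat \<alpha> \<beta> (fst z)) $ i)^2 \<le> 2 * norm x^2 + 2 * norm (x + y)^2 + 4 * norm (\<beta> *\<^sub>R x + \<alpha> *\<^sub>R y)^2 * norm (fst z) ^ 4" .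
  have "0 \<le> (real (t+1))^2 * ((snd z - xs \<bullet> fst z)^2 * (fst z \<bullet> (\<beta> *\<^sub>R x + \<alpha> *\<^sub>R y))^2)" by simp
  with 1 show ?thesis unfolding Dom_def by linarith
qed

lemma e_le_Dom: "(stack x y \<bullet> epsv \<alpha> \<beta> xs t (fst z) (snd z))^2 \<le> Dom x y t z"
proof -
  have "0 \<le> 2 * norm x^2 + 2 * norm (x + y)^2 + 4 * norm (\<beta> *\<^sub>R x + \<alpha> *\<^sub>R y)^2 * norm (fst z) ^ 4" by simp
  then show ?thesis unfolding Dom_def ef_sq by linarith
qed

lemma Dom_ge1: "1 \<le> Dom x y t z"
proof -
  have "0 \<le> 2 * norm x^2 + 2 * norm (x + y)^2 + 4 * norm (\<beta> *\<^sub>R x + \<alpha> *\<^sub>R y)^2 * norm (fst z) ^ 4" by simp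
  moreover have "0 \<le> (real (t+1))^2 * ((snd z - xs \<bullet> fst z)^2 * (fst z \<bullet> (\<beta> *\<^sub>R x + \<alpha> *\<^sub>R y))^2)" by simp
  ultimately show ?thesis unfolding Dom_def by linarith
qed

lemma bound_int:
  assumes "integrable \<rho> D" "f \<in> borel_measurable \<rho>" "\<And>z. \<bar>f z\<bar> \<le> D z"
  shows "integrable \<rho> (f :: _ \<Rightarrow> real)"
proof (rule bI_bound[OF assms(1,2)])
  show "AE z in \<rho>. norm (f z) \<le> norm (D z)"
  proof (rule AE_I2)
    fix z
    have "\<bar>f z\<bar> \<le> D z" by (rule assms(3))
    then have "\<bar>D z\<bar> = D z" by (metis abs_ge_zero abs_of_nonneg order_trans)
    then show "norm (f z) \<le> norm (D z)" using assms(3)[of z] by simp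
  qed
qed

lemma VV_int: "integrable \<rho> (\<lambda>z. (stack x y v* Jmat \<alpha> \<beta> (fst z)) $ i * (stack x y v* Jmat \<alpha> \<beta> (fst z)) $ j)"
proof (rule bound_int[OF bI_mr[OF Dom_int[of x y t], of 2]])
  show "(\<lambda>z. (stack x y v* Jmat \<alpha> \<beta> (fst z)) $ i * (stack x y v* Jmat \<alpha> \<beta> (fst z)) $ j) \<in> borel_measurable \<rho>" by (intro meas_cont continuous_intros)
  fix z
  show "\<bar>(stack x y v* Jmat \<alpha> \<beta> (fst z)) $ i * (stack x y v* Jmat \<alpha> \<beta> (fst z)) $ j\<bar> \<le> 2 * Dom x y t z"
    using abs_mult_le_sq[of "(stack x y v* Jmat \<alpha> \<beta> (fst z)) $ i" "(stack x y v* Jmat \<alpha> \<beta> (fst z)) $ j"] V_le_Dom[where x=x and y=y and t=t and z=z and i=i] V_le_Dom[where x=x and y=y and t=t and z=z and i=j] by linarith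
qed

lemma eV_int: "integrable \<rho> (\<lambda>z. (stack x y \<bullet> epsv \<alpha> \<beta> xs t (fst z) (snd z)) * (stack x y v* Jmat \<alpha> \<beta> (fst z)) $ i)"
proof (rule bound_int[OF bI_mr[OF Dom_int[of x y t], of 2]])
  show "(\<lambda>z. (stack x y \<bullet> epsv \<alpha> \<beta> xs t (fst z) (snd z)) * (stack x y v* Jmat \<alpha> \<beta> (fst z)) $ i) \<in> borel_measurable \<rho>" by (intro meas_cont continuous_intros)
  fix z
  show "\<bar>(stack x y \<bullet> epsv \<alpha> \<beta> xs t (fst z) (snd z)) * (stack x y v* Jmat \<alpha> \<beta> (fst z)) $ i\<bar> \<le> 2 * Dom x y t z"
    using abs_mult_le_sq[of "(stack x y \<bullet> epsv \<alpha> \<beta> xs t (fst z) (snd z))" "(stack x y v* Jmat \<alpha> \<beta> (fst z)) $ i"] V_le_Dom[where x=x and y=y and t=t and z=z and i=i] e_le_Dom[where x=x and y=y and t=t and z=z] by linarith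
qed

lemma V_int: "integrable \<rho> (\<lambda>z. (stack x y v* Jmat \<alpha> \<beta> (fst z)) $ i)"
proof (rule bound_int[OF bI_mr[OF Dom_int[of x y t], of 2]])
  show "(\<lambda>z. (stack x y v* Jmat \<alpha> \<beta> (fst z)) $ i) \<in> borel_measurable \<rho>" by (intro meas_cont continuous_intros)
  fix z
  show "\<bar>(stack x y v* Jmat \<alpha> \<beta> (fst z)) $ i\<bar> \<le> 2 * Dom x y t z"
    using abs_le_1_sq[of "(stack x y v* Jmat \<alpha> \<beta> (fst z)) $ i"] V_le_Dom[where x=x and y=y and t=t and z=z and i=i] Dom_ge1[where x=x and y=y and t=t and z=z] by linarith
qed

lemma e_int: "integrable \<rho> (\<lambda>z. (stack x y \<bullet> epsv \<alpha> \<beta> xs t (fst z) (snd z)))"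
proof (rule bound_int[OF bI_mr[OF Dom_int[of x y t], of 2]])
  show "(\<lambda>z. (stack x y \<bullet> epsv \<alpha> \<beta> xs t (fst z) (snd z))) \<in> borel_measurable \<rho>" by (intro meas_cont continuous_intros)
  fix z
  show "\<bar>(stack x y \<bullet> epsv \<alpha> \<beta> xs t (fst z) (snd z))\<bar> \<le> 2 * Dom x y t z"
    using abs_le_1_sq[of "(stack x y \<bullet> epsv \<alpha> \<beta> xs t (fst z) (snd z))"] e_le_Dom[where x=x and y=y and t=t and z=z] Dom_ge1[where x=x and y=y and t=t and z=z] by linarith
qed

lemma e_mean: "integral\<^sup>L \<rho> (\<lambda>z. stack x y \<bullet> epsv \<alpha> \<beta> xs t (fst z) (snd z)) = 0"
  unfolding ef_eq using FOC by simp

lemma e2_int: "integrable \<rho> (\<lambda>z. (stack x y \<bullet> epsv \<alpha> \<beta> xs t (fst z) (snd z))^2)"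
  unfolding ef_sq by (intro bI_mr Ks(1))

lemma e2_bound: "integral\<^sup>L \<rho> (\<lambda>z. (stack x y \<bullet> epsv \<alpha> \<beta> xs t (fst z) (snd z))^2)
   \<le> (real (t+1))^2 * (\<sigma>^2 * ((\<beta> *\<^sub>R x + \<alpha> *\<^sub>R y) \<bullet> (H *v (\<beta> *\<^sub>R x + \<alpha> *\<^sub>R y))))"
  unfolding ef_sq using Ks(2) by (simp add: mult_left_mono)

end

lemma sq_sum_expand: "(\<Sum>i\<in>A. a i)^2 = (\<Sum>i\<in>A. \<Sum>j\<in>A. a i * (a j :: real))"
  by (simp add: power2_eq_square sum_product)

context rset2 begin

interpretation P: prob_space \<rho> by (rule rho_prob)
interpretation Q: prob_space M by (rule M_prob)

lemma thth_int: assumes "\<forall>u. integrable M (\<lambda>\<omega>. (u \<bullet> th t \<omega>)^2)"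
  shows "integrable M (\<lambda>\<omega>. th t \<omega> $ i * th t \<omega> $ j)"
proof -
  have e: "th t \<omega> $ i * th t \<omega> $ j = (1/4) * ((axis i 1 + axis j 1) \<bullet> th t \<omega>)^2 - (1/4) * ((axis i 1 - axis j 1) \<bullet> th t \<omega>)^2" for \<omega>
    by (simp add: inner_add_left inner_diff_left inner_axis' power2_eq_square algebra_simps)
  show ?thesis unfolding e using assms by (intro bI_diff bI_mr) auto
qed

lemma th_i_int: assumes "\<forall>u. integrable M (\<lambda>\<omega>. u \<bullet> th t \<omega>)"
  shows "integrable M (\<lambda>\<omega>. th t \<omega> $ i)"
  using assms[rule_format, of "axis i 1"] by (simp add: inner_axis')

lemma th_i_mean: assumes "\<forall>u. integral\<^sup>L M (\<lambda>\<omega>. u \<bullet> th t \<omega>) = 0"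
  shows "integral\<^sup>L M (\<lambda>\<omega>. th t \<omega> $ i) = 0"
  using assms[rule_format, of "axis i 1"] by (simp add: inner_axis')

lemma qf_S: assumes "\<forall>u. integrable M (\<lambda>\<omega>. (u \<bullet> th t \<omega>)^2)"
  shows "integral\<^sup>L M (\<lambda>\<omega>. (v \<bullet> th t \<omega>)^2) =
     (\<Sum>i\<in>UNIV. \<Sum>j\<in>UNIV. (v $ i * v $ j) * integral\<^sup>L M (\<lambda>\<omega>. th t \<omega> $ i * th t \<omega> $ j))"
proof -
  have e: "(v \<bullet> th t \<omega>)^2 = (\<Sum>i\<in>UNIV. \<Sum>j\<in>UNIV. (v $ i * v $ j) * (th t \<omega> $ i * th t \<omega> $ j))" for \<omega>
    unfolding inner_vec_def' sq_sum_expand by (simp add: mult_ac)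
  show ?thesis unfolding e
    using thth_int[OF assms]
    by (simp add: bL_sum bI_sum bI_mr)
qed

lemma step:
  assumes IHa: "\<forall>u. integrable M (\<lambda>\<omega>. (u \<bullet> th t \<omega>)^2)"
    and IHb: "\<forall>u. integrable M (\<lambda>\<omega>. u \<bullet> th t \<omega>)"
    and IHm: "\<forall>u. integral\<^sup>L M (\<lambda>\<omega>. u \<bullet> th t \<omega>) = 0"
    and IHc: "\<forall>u. integral\<^sup>L M (\<lambda>\<omega>. (u \<bullet> th t \<omega>)^2) \<le> (real t)^2 * \<sigma>^2 * (u \<bullet> (Bm *v u))"
  shows "integrable M (\<lambda>\<omega>. (u \<bullet> th (Suc t) \<omega>)^2)"
    and "integrable M (\<lambda>\<omega>. u \<bullet> th (Suc t) \<omega>)"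
    and "integral\<^sup>L M (\<lambda>\<omega>. u \<bullet> th (Suc t) \<omega>) = 0"
    and "integral\<^sup>L M (\<lambda>\<omega>. (u \<bullet> th (Suc t) \<omega>)^2) \<le> (real (Suc t))^2 * \<sigma>^2 * (u \<bullet> (Bm *v u))"
proof -
  obtain x y where u: "u = stack x y" using stack_split by blast
  define Vz where "Vz z = stack x y v* Jmat \<alpha> \<beta> (fst (z :: (real^'d) \<times> real))" for z
  define ez where "ez = (\<lambda>z. stack x y \<bullet> epsv \<alpha> \<beta> xs t (fst z) (snd z))"
  have lin0: "u \<bullet> th (Suc t) \<omega> = Vz (X t \<omega>) \<bullet> th t \<omega> + ez (X t \<omega>)" for \<omega>
    by (simp add: u Vz_def ez_def inner_add_right dot_lmul_matrix)
  have lin: "u \<bullet> th (Suc t) \<omega> = (\<Sum>i\<in>UNIV. Vz (X t \<omega>) $ i * th t \<omega> $ i) + ez (X t \<omega>)" for \<omega>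
    unfolding lin0 inner_vec_def'[of "Vz (X t \<omega>)"] ..
  have sq: "(u \<bullet> th (Suc t) \<omega>)^2 =
      (\<Sum>i\<in>UNIV. \<Sum>j\<in>UNIV. (Vz (X t \<omega>) $ i * Vz (X t \<omega>) $ j) * (th t \<omega> $ i * th t \<omega> $ j))
      + 2 * (\<Sum>i\<in>UNIV. (ez (X t \<omega>) * Vz (X t \<omega>) $ i) * th t \<omega> $ i) + (ez (X t \<omega>))^2" for \<omega>
  proof -
    have "(u \<bullet> th (Suc t) \<omega>)^2 = (\<Sum>i\<in>UNIV. Vz (X t \<omega>) $ i * th t \<omega> $ i)^2
        + 2 * (\<Sum>i\<in>UNIV. ez (X t \<omega>) * (Vz (X t \<omega>) $ i * th t \<omega> $ i)) + (ez (X t \<omega>))^2"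
      unfolding lin by (simp add: power2_eq_square algebra_simps sum_distrib_left)
    then show ?thesis unfolding sq_sum_expand by (simp add: mult_ac)
  qed
  have mVV: "(\<lambda>z. Vz z $ i * Vz z $ j) \<in> borel_measurable \<rho>" for i j
    unfolding Vz_def by (intro meas_cont continuous_intros)
  have meV: "(\<lambda>z. ez z * Vz z $ i) \<in> borel_measurable \<rho>" for i
    unfolding Vz_def ez_def by (intro meas_cont continuous_intros)
  have mV: "(\<lambda>z. Vz z $ i) \<in> borel_measurable \<rho>" for i
    unfolding Vz_def by (intro meas_cont continuous_intros)
  have me: "ez \<in> borel_measurable \<rho>"
    unfolding ez_def by (intro meas_cont continuous_intros)
  have me2: "(\<lambda>z. (ez z)^2) \<in> borel_measurable \<rho>"
    unfolding ez_def by (intro meas_cont continuous_intros)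
  have mgg: "(\<lambda>v::real^('d+'d). v $ i * v $ j) \<in> borel_measurable borel" for i j
    by (intro borel_measurable_continuous_onI continuous_intros)
  have mg: "(\<lambda>v::real^('d+'d). v $ i) \<in> borel_measurable borel" for i
    by (intro borel_measurable_continuous_onI continuous_intros)
  have iVV: "integrable \<rho> (\<lambda>z. Vz z $ i * Vz z $ j)" for i j unfolding Vz_def by (rule VV_int)
  have ieV: "integrable \<rho> (\<lambda>z. ez z * Vz z $ i)" for i unfolding Vz_def ez_def by (rule eV_int)
  have iV: "integrable \<rho> (\<lambda>z. Vz z $ i)" for i unfolding Vz_def by (rule V_int)
  have ie: "integrable \<rho> ez" unfolding ez_def by (rule e_int)
  have ie2: "integrable \<rho> (\<lambda>z. (ez z)^2)" unfolding ez_def by (rule e2_int)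
  have gth: "integrable M (\<lambda>\<omega>. th t \<omega> $ i * th t \<omega> $ j)" for i j by (rule thth_int[OF IHa])
  have gi: "integrable M (\<lambda>\<omega>. th t \<omega> $ i)" for i by (rule th_i_int[OF IHb])
  have A: "integrable M (\<lambda>\<omega>. (Vz (X t \<omega>) $ i * Vz (X t \<omega>) $ j) * (th t \<omega> $ i * th t \<omega> $ j))"
     "integral\<^sup>L M (\<lambda>\<omega>. (Vz (X t \<omega>) $ i * Vz (X t \<omega>) $ j) * (th t \<omega> $ i * th t \<omega> $ j))
       = integral\<^sup>L \<rho> (\<lambda>z. Vz z $ i * Vz z $ j) * integral\<^sup>L M (\<lambda>\<omega>. th t \<omega> $ i * th t \<omega> $ j)" for i j
    using Eprod[OF mVV[of i j] iVV[of i j] mgg[of i j] gth[of i j]] by auto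
  have B: "integrable M (\<lambda>\<omega>. (ez (X t \<omega>) * Vz (X t \<omega>) $ i) * th t \<omega> $ i)"
     "integral\<^sup>L M (\<lambda>\<omega>. (ez (X t \<omega>) * Vz (X t \<omega>) $ i) * th t \<omega> $ i) = 0" for i
    using Eprod[OF meV[of i] ieV[of i] mg[of i] gi[of i]] th_i_mean[OF IHm, of i] by auto
  have D: "integrable M (\<lambda>\<omega>. Vz (X t \<omega>) $ i * th t \<omega> $ i)"
     "integral\<^sup>L M (\<lambda>\<omega>. Vz (X t \<omega>) $ i * th t \<omega> $ i) = 0" for i
    using Eprod[OF mV[of i] iV[of i] mg[of i] gi[of i]] th_i_mean[OF IHm, of i] by auto
  have C: "integrable M (\<lambda>\<omega>. (ez (X t \<omega>))^2)" "integral\<^sup>L M (\<lambda>\<omega>. (ez (X t \<omega>))^2) = integral\<^sup>L \<rho> (\<lambda>z. (ez z)^2)"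
    using EX[OF me2 ie2] by auto
  have E: "integrable M (\<lambda>\<omega>. ez (X t \<omega>))" "integral\<^sup>L M (\<lambda>\<omega>. ez (X t \<omega>)) = 0"
    using EX[OF me ie] e_mean[of x y t] by (auto simp: ez_def)
  show "integrable M (\<lambda>\<omega>. u \<bullet> th (Suc t) \<omega>)"
    unfolding lin using D E by (intro bI_add bI_sum) auto
  show "integral\<^sup>L M (\<lambda>\<omega>. u \<bullet> th (Suc t) \<omega>) = 0"
    unfolding lin using D E by (simp add: bL_add bL_sum bI_sum)
  show "integrable M (\<lambda>\<omega>. (u \<bullet> th (Suc t) \<omega>)^2)"
    unfolding sq using A B C by (intro bI_add bI_sum bI_mr) auto
  have I1: "integral\<^sup>L M (\<lambda>\<omega>. (u \<bullet> th (Suc t) \<omega>)^2) =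
     (\<Sum>i\<in>UNIV. \<Sum>j\<in>UNIV. integral\<^sup>L \<rho> (\<lambda>z. Vz z $ i * Vz z $ j) * integral\<^sup>L M (\<lambda>\<omega>. th t \<omega> $ i * th t \<omega> $ j))
     + integral\<^sup>L \<rho> (\<lambda>z. (ez z)^2)"
    unfolding sq using A B C by (simp add: bL_add bL_sum bI_sum bI_add bI_mr)
  define S where "S i j = integral\<^sup>L M (\<lambda>\<omega>. th t \<omega> $ i * th t \<omega> $ j)" for i j
  have I2: "(\<Sum>i\<in>UNIV. \<Sum>j\<in>UNIV. integral\<^sup>L \<rho> (\<lambda>z. Vz z $ i * Vz z $ j) * S i j)
      = integral\<^sup>L \<rho> (\<lambda>z. \<Sum>i\<in>UNIV. \<Sum>j\<in>UNIV. (Vz z $ i * Vz z $ j) * S i j)"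
    using iVV by (simp add: bL_sum bI_sum bI_ml)
  have pw: "(\<Sum>i\<in>UNIV. \<Sum>j\<in>UNIV. (Vz z $ i * Vz z $ j) * S i j) \<le> (real t)^2 * \<sigma>^2 * (Vz z \<bullet> (Bm *v Vz z))" for z
  proof -
    have "(\<Sum>i\<in>UNIV. \<Sum>j\<in>UNIV. (Vz z $ i * Vz z $ j) * S i j) = integral\<^sup>L M (\<lambda>\<omega>. (Vz z \<bullet> th t \<omega>)^2)"
      unfolding qf_S[OF IHa] S_def ..
    also have "\<dots> \<le> (real t)^2 * \<sigma>^2 * (Vz z \<bullet> (Bm *v Vz z))" using IHc by blast
    finally show ?thesis .
  qed
  define Xv where "Xv = integral\<^sup>L \<rho> (\<lambda>z. Vz z \<bullet> (Bm *v Vz z))"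
  have iQ: "integrable \<rho> (\<lambda>z. Vz z \<bullet> (Bm *v Vz z))" unfolding Vz_def by (rule Kmain(1))
  have I3: "integral\<^sup>L \<rho> (\<lambda>z. \<Sum>i\<in>UNIV. \<Sum>j\<in>UNIV. (Vz z $ i * Vz z $ j) * S i j) \<le> (real t)^2 * \<sigma>^2 * Xv"
  proof -
    have "integral\<^sup>L \<rho> (\<lambda>z. \<Sum>i\<in>UNIV. \<Sum>j\<in>UNIV. (Vz z $ i * Vz z $ j) * S i j)
        \<le> integral\<^sup>L \<rho> (\<lambda>z. (real t)^2 * \<sigma>^2 * (Vz z \<bullet> (Bm *v Vz z)))"
      by (rule Bochner_Integration.integral_mono) (use iVV iQ pw in \<open>auto intro!: bI_sum bI_ml bI_mr\<close>)
    then show ?thesis using iQ by (simp add: Xv_def)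
  qed
  define W where "W = (\<beta> *\<^sub>R x + \<alpha> *\<^sub>R y) \<bullet> (H *v (\<beta> *\<^sub>R x + \<alpha> *\<^sub>R y))"
  have K2: "Xv + W \<le> u \<bullet> (Bm *v u)" using Kmain(2)[of x y] unfolding Xv_def W_def Vz_def u .
  have X0: "0 \<le> Xv" unfolding Xv_def by (rule Bochner_Integration.integral_nonneg) (rule Q_nonneg)
  have W0: "0 \<le> W" unfolding W_def by (rule Hpos)
  have C2: "integral\<^sup>L \<rho> (\<lambda>z. (ez z)^2) \<le> (real (t+1))^2 * (\<sigma>^2 * W)"
    unfolding ez_def W_def by (rule e2_bound)
  have "integral\<^sup>L M (\<lambda>\<omega>. (u \<bullet> th (Suc t) \<omega>)^2) \<le> (real t)^2 * \<sigma>^2 * Xv + (real (t+1))^2 * (\<sigma>^2 * W)"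
    using I1 I2 I3 C2 unfolding S_def by linarith
  also have "\<dots> \<le> (real (Suc t))^2 * \<sigma>^2 * (Xv + W)"
  proof -
    have "(real t)^2 \<le> (real (Suc t))^2" by (simp add: power_mono)
    then have "(real t)^2 * (\<sigma>^2 * Xv) \<le> (real (Suc t))^2 * (\<sigma>^2 * Xv)"
      using X0 by (intro mult_right_mono) auto
    then show ?thesis by (simp add: algebra_simps)
  qed
  also have "\<dots> \<le> (real (Suc t))^2 * \<sigma>^2 * (u \<bullet> (Bm *v u))"
    using K2 by (intro mult_left_mono) auto
  finally show "integral\<^sup>L M (\<lambda>\<omega>. (u \<bullet> th (Suc t) \<omega>)^2) \<le> (real (Suc t))^2 * \<sigma>^2 * (u \<bullet> (Bm *v u))" .
qed

lemma main_ind: "(\<forall>u. integrable M (\<lambda>\<omega>. (u \<bullet> th t \<omega>)^2)) \<and> (\<forall>u. integrable M (\<lambda>\<omega>. u \<bullet> th t \<omega>))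
   \<and> (\<forall>u. integral\<^sup>L M (\<lambda>\<omega>. u \<bullet> th t \<omega>) = 0)
   \<and> (\<forall>u. integral\<^sup>L M (\<lambda>\<omega>. (u \<bullet> th t \<omega>)^2) \<le> (real t)^2 * \<sigma>^2 * (u \<bullet> (Bm *v u)))"
proof (induction t)
  case 0 then show ?case by simp
next
  case (Suc t)
  then show ?case using step[of t] by blast
qed

lemma final: "integrable M (\<lambda>\<omega>. outer (th t \<omega>) (th t \<omega>))
  \<and> loewner_le (integral\<^sup>L M (\<lambda>\<omega>. outer (th t \<omega>) (th t \<omega>))) (((real t)^2 * \<sigma>^2) *\<^sub>R Bm)"
proof -
  have IHa: "\<forall>u. integrable M (\<lambda>\<omega>. (u \<bullet> th t \<omega>)^2)" using main_ind by blast
  have IHc: "\<forall>u. integral\<^sup>L M (\<lambda>\<omega>. (u \<bullet> th t \<omega>)^2) \<le> (real t)^2 * \<sigma>^2 * (u \<bullet> (Bm *v u))"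
    using main_ind by blast
  have mo: "(\<lambda>\<omega>. outer (th t \<omega>) (th t \<omega>)) \<in> borel_measurable M"
  proof -
    have "(\<lambda>v::real^('d+'d). outer v v) \<in> borel_measurable borel"
      by (intro borel_measurable_continuous_onI continuous_intros)
    from measurable_comp[OF th_meas this] show ?thesis by (simp add: comp_def)
  qed
  have nn: "norm (outer (th t \<omega>) (th t \<omega>)) = (\<Sum>i\<in>UNIV. th t \<omega> $ i * th t \<omega> $ i)" for \<omega>
  proof -
    have "norm (th t \<omega>) * norm (th t \<omega>) = th t \<omega> \<bullet> th t \<omega>"
      by (metis power2_norm_eq_inner power2_eq_square)
    then show ?thesis by (simp add: norm_outer inner_vec_def')
  qed
  have io: "integrable M (\<lambda>\<omega>. outer (th t \<omega>) (th t \<omega>))"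
    by (rule integrable_norm_cancel[OF _ mo]) (unfold nn, intro bI_sum thth_int[OF IHa])
  have "v \<bullet> (integral\<^sup>L M (\<lambda>\<omega>. outer (th t \<omega>) (th t \<omega>)) *v v) \<le> v \<bullet> ((((real t)^2 * \<sigma>^2) *\<^sub>R Bm) *v v)" for v
  proof -
    have "v \<bullet> (integral\<^sup>L M (\<lambda>\<omega>. outer (th t \<omega>) (th t \<omega>)) *v v) = integral\<^sup>L M (\<lambda>\<omega>. (v \<bullet> th t \<omega>)^2)"
      using qf_integral[OF io, of v v] by (simp add: outer_qf inner_commute power2_eq_square)
    also have "\<dots> \<le> (real t)^2 * \<sigma>^2 * (v \<bullet> (Bm *v v))" using IHc by blast
    also have "\<dots> = v \<bullet> ((((real t)^2 * \<sigma>^2) *\<^sub>R Bm) *v v)" by (simp add: scaleR_mv)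
    finally show ?thesis .
  qed
  then show ?thesis using io unfolding loewner_le_def by blast
qed

end

theorem lemma7:
  fixes \<rho> :: "((real^'d) \<times> real) measure"
    and M :: "'w measure"
    and X :: "nat \<Rightarrow> 'w \<Rightarrow> (real^'d) \<times> real"
    and H :: "real^'d^'d"
    and xs :: "real^'d"
    and R \<sigma> \<kappa> \<alpha> \<beta> :: real
    and t :: nat
  assumes rho_prob: "prob_space \<rho>"
    and rho_sets: "sets \<rho> = sets borel"
    and int_a2: "integrable \<rho> (\<lambda>(a, b). (norm a)^2)"
    and int_b2: "integrable \<rho> (\<lambda>(a, b). b^2)"
    and H_def: "H = integral\<^sup>L \<rho> (\<lambda>(a, b). outer a a)"
    and H_inv: "invertible H"
    and xs_min: "\<forall>x. risk \<rho> xs \<le> risk \<rho> x"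
    and int_R: "integrable \<rho> (\<lambda>(a, b). (norm a)^2 *\<^sub>R outer a a)"
    and hR: "loewner_le (integral\<^sup>L \<rho> (\<lambda>(a, b). (norm a)^2 *\<^sub>R outer a a)) (R^2 *\<^sub>R H)"
    and int_\<sigma>: "integrable \<rho> (\<lambda>(a, b). (b - xs \<bullet> a)^2 *\<^sub>R outer a a)"
    and h\<sigma>: "loewner_le (integral\<^sup>L \<rho> (\<lambda>(a, b). (b - xs \<bullet> a)^2 *\<^sub>R outer a a)) (\<sigma>^2 *\<^sub>R H)"
    and int_\<kappa>: "integrable \<rho> (\<lambda>(a, b). (a \<bullet> (matrix_inv H *v a)) *\<^sub>R outer a a)"
    and h\<kappa>: "loewner_le (integral\<^sup>L \<rho> (\<lambda>(a, b). (a \<bullet> (matrix_inv H *v a)) *\<^sub>R outer a a)) (\<kappa> *\<^sub>R H)"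
    and \<alpha>_pos: "\<alpha> > 0" and \<beta>_pos: "\<beta> > 0"
    and step1: "(\<alpha> + 2 * \<beta>) * R^2 \<le> 1"
    and step2: "\<alpha> \<le> \<beta> / (2 * \<kappa>)"
    and M_prob: "prob_space M"
    and X_indep: "prob_space.indep_vars M (\<lambda>_. \<rho>) X UNIV"
    and X_distr: "\<And>s. distr M \<rho> (X s) = \<rho>"
  shows "integrable M (\<lambda>\<omega>. outer (theta_v \<alpha> \<beta> xs (\<lambda>s. X s \<omega>) t) (theta_v \<alpha> \<beta> xs (\<lambda>s. X s \<omega>) t))
    \<and> loewner_le
        (integral\<^sup>L M (\<lambda>\<omega>. outer (theta_v \<alpha> \<beta> xs (\<lambda>s. X s \<omega>) t) (theta_v \<alpha> \<beta> xs (\<lambda>s. X s \<omega>) t)))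
        (((real t)^2 * \<sigma>^2) *\<^sub>R
           blockm ((2 * \<alpha>) *\<^sub>R matrix_inv (\<beta> *\<^sub>R H) + (2 * \<beta> - 3 * \<alpha>) *\<^sub>R mat 1)
                  ((\<alpha> / \<beta> * (2 * \<beta> - \<alpha>)) *\<^sub>R mat 1)
                  ((\<alpha> / \<beta> * (2 * \<beta> - \<alpha>)) *\<^sub>R mat 1)
                  ((2 * \<alpha>^2 / \<beta>) *\<^sub>R mat 1))"
proof -
  interpret rset2 \<rho> H xs R \<sigma> \<kappa> \<alpha> \<beta> M X
    by (intro rset2.intro rset.intro rset2_axioms.intro) (fact assms)+
  show ?thesis by (rule final)
qed

end
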